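(* Let $(\Lambda,\mathcal{G}_\Lambda)$ be a labeled graph all of whose vertex groups are directly-indecomposable cyclic groups, and let $u$ be a CP element of $W(\Lambda)$. Then the centralizer of $u$ in $W(\Lambda)$ equals $W(\mathrm{st}(u))$, i.e. $C_{W(\Lambda)}(u)=W(\mathrm{st}(u))$.
   Context: A labeled graph $(\Lambda,\mathcal{G}_\Lambda)$ consists of a nonempty finite simplicial graph $\Lambda$ with vertex set $V_\Lambda$ and a family $\mathcal{G}_\Lambda=\{G_v\}_{v\in V_\Lambda}$ of nontrivial groups. Its graph product $W(\Lambda)=W(\Lambda,\mathcal{G}_\Lambda)$ is the quotient of the free product $\ast_{v\in V_\Lambda}G_v$ by the relations $gh=hg$ for all $g\in G_v$, $h\in G_{v'}$ with $v,v'$ adjacent in $\Lambda$. For a full subgraph $\Theta$ of $\Lambda$, $W(\Theta)$ denotes the subgroup of $W(\Lambda)$ generated by the images of the $G_v$, $v\in V_\Theta$. A cyclic group is primary if it has prime-power order, and directly-indecomposable if it is infinite or primary. When all vertex groups are cyclic, a generator of each $G_v$ is fixed and also denoted $v$; words are words in the alphabet $V_\Lambda^{\pm1}$, and a word is reduced if no shorter word represents the same element of $W(\Lambda)$. For $g\in W(\Lambda)$, $\mathrm{supp}(g)$ is the set of vertices $v$ such that $v$ or $v^{-1}$ appears in some reduced word representing $g$. An element $u\in W(\Lambda)$ is a CP element if $u\in W(\Delta)$ for some complete subgraph $\Delta$ of $\Lambda$. For such $u$, $\mathrm{st}(u)$ denotes the full subgraph of $\Lambda$ spanned by $\mathrm{supp}(u)$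 together with all vertices adjacent to every vertex of $\mathrm{supp}(u)$. *)

theory Defs
  imports "HOL-Algebra.Group" "HOL-Computational_Algebra.Primes"
begin

text \<open>The vertex group at v is cyclic generated by v, of order
  ord v, where ord v = 0 encodes the infinite cyclic group.
  A letter (v, True) is the generator v, (v, False) is its inverse.\<close>

type_synonym 'v letter = "'v \<times> bool"

definition labeled_graph :: "'v set \<Rightarrow> ('v \<Rightarrow> 'v \<Rightarrow> bool) \<Rightarrow> bool" where
  "labeled_graph V E \<longleftrightarrow> finite V \<and> V \<noteq> {} \<and>
     (\<forall>a b. E a b \<longrightarrow> a \<in> V \<and> b \<in> V) \<and>
     (\<forall>a b. E a b \<longrightarrow> E b a) \<and> (\<forall>a. \<not> E a a)"

text \<open>Cyclic group of order n (0 = infinite) is nontrivial and directly-indecomposable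
  (infinite or of prime-power order).\<close>
definition dir_indec_cyclic_order :: "nat \<Rightarrow> bool" where
  "dir_indec_cyclic_order n \<longleftrightarrow> n = 0 \<or> (\<exists>p k. prime p \<and> k \<ge> 1 \<and> n = p ^ k)"

definition letters :: "'v set \<Rightarrow> 'v letter set" where
  "letters S = S \<times> UNIV"

inductive gp_eq :: "'v set \<Rightarrow> ('v \<Rightarrow> 'v \<Rightarrow> bool) \<Rightarrow> ('v \<Rightarrow> nat)
    \<Rightarrow> 'v letter list \<Rightarrow> 'v letter list \<Rightarrow> bool"
  for V E ord where
  gp_refl: "w \<in> lists (letters V) \<Longrightarrow> gp_eq V E ord w w"
| gp_sym: "gp_eq V E ord w w' \<Longrightarrow> gp_eq V E ord w' w"
| gp_trans: "gp_eq V E ord w w' \<Longrightarrow> gp_eq V E ord w' w'' \<Longrightarrow> gp_eq V E ord w w''"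
| gp_ctxt: "gp_eq V E ord w w' \<Longrightarrow> a \<in> lists (letters V) \<Longrightarrow> b \<in> lists (letters V)
     \<Longrightarrow> gp_eq V E ord (a @ w @ b) (a @ w' @ b)"
| gp_cancel: "v \<in> V \<Longrightarrow> gp_eq V E ord [(v, s), (v, \<not> s)] []"
| gp_order: "v \<in> V \<Longrightarrow> ord v > 0 \<Longrightarrow> gp_eq V E ord (replicate (ord v) (v, True)) []"
| gp_comm: "E v v' \<Longrightarrow> gp_eq V E ord [(v, s), (v', s')] [(v', s'), (v, s)]"

definition gp_rel :: "'v set \<Rightarrow> ('v \<Rightarrow> 'v \<Rightarrow> bool) \<Rightarrow> ('v \<Rightarrow> nat) \<Rightarrow> 'v letter list rel" where
  "gp_rel V E ord = {(w, w'). gp_eq V E ord w w'}"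

definition gp_cls :: "'v set \<Rightarrow> ('v \<Rightarrow> 'v \<Rightarrow> bool) \<Rightarrow> ('v \<Rightarrow> nat)
    \<Rightarrow> 'v letter list \<Rightarrow> 'v letter list set" where
  "gp_cls V E ord w = gp_rel V E ord `` {w}"

definition graph_product :: "'v set \<Rightarrow> ('v \<Rightarrow> 'v \<Rightarrow> bool) \<Rightarrow> ('v \<Rightarrow> nat)
    \<Rightarrow> 'v letter list set monoid" where
  "graph_product V E ord =
     \<lparr> carrier = lists (letters V) // gp_rel V E ord,
       monoid.mult = (\<lambda>X Y. \<Union>x\<in>X. \<Union>y\<in>Y. gp_cls V E ord (x @ y)),
       monoid.one = gp_cls V E ord [] \<rparr>"

text \<open>W(\<Theta>) for a set of vertices \<Theta> (full subgraph spanned by \<Theta>).\<close>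
definition gp_sub :: "'v set \<Rightarrow> ('v \<Rightarrow> 'v \<Rightarrow> bool) \<Rightarrow> ('v \<Rightarrow> nat) \<Rightarrow> 'v set
    \<Rightarrow> 'v letter list set set" where
  "gp_sub V E ord \<Theta> = gp_cls V E ord ` lists (letters \<Theta>)"

definition reduced_word :: "'v set \<Rightarrow> ('v \<Rightarrow> 'v \<Rightarrow> bool) \<Rightarrow> ('v \<Rightarrow> nat)
    \<Rightarrow> 'v letter list \<Rightarrow> bool" where
  "reduced_word V E ord w \<longleftrightarrow> w \<in> lists (letters V) \<and>
     (\<forall>w'. gp_eq V E ord w w' \<longrightarrow> length w \<le> length w')"

definition gp_supp :: "'v set \<Rightarrow> ('v \<Rightarrow> 'v \<Rightarrow> bool) \<Rightarrow> ('v \<Rightarrow> nat)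
    \<Rightarrow> 'v letter list set \<Rightarrow> 'v set" where
  "gp_supp V E ord g = {v. \<exists>w. gp_cls V E ord w = g \<and> reduced_word V E ord w \<and> v \<in> fst ` set w}"

definition complete_subgraph :: "'v set \<Rightarrow> ('v \<Rightarrow> 'v \<Rightarrow> bool) \<Rightarrow> 'v set \<Rightarrow> bool" where
  "complete_subgraph V E \<Delta> \<longleftrightarrow> \<Delta> \<subseteq> V \<and> (\<forall>a\<in>\<Delta>. \<forall>b\<in>\<Delta>. a \<noteq> b \<longrightarrow> E a b)"

definition CP_element :: "'v set \<Rightarrow> ('v \<Rightarrow> 'v \<Rightarrow> bool) \<Rightarrow> ('v \<Rightarrow> nat)
    \<Rightarrow> 'v letter list set \<Rightarrow> bool" where
  "CP_element V E ord u \<longleftrightarrow> (\<exists>\<Delta>. complete_subgraph V E \<Delta> \<and> u \<in> gp_sub V E ord \<Delta>)"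

definition gp_st :: "'v set \<Rightarrow> ('v \<Rightarrow> 'v \<Rightarrow> bool) \<Rightarrow> ('v \<Rightarrow> nat)
    \<Rightarrow> 'v letter list set \<Rightarrow> 'v set" where
  "gp_st V E ord u = gp_supp V E ord u \<union>
     {v \<in> V. \<forall>s\<in>gp_supp V E ord u. E v s}"

definition centralizer :: "('a, 'b) monoid_scheme \<Rightarrow> 'a \<Rightarrow> 'a set" where
  "centralizer G u = {g \<in> carrier G. g \<otimes>\<^bsub>G\<^esub> u = u \<otimes>\<^bsub>G\<^esub> g}"

end

theory Submission
  imports Defs
begin


locale GP =
  fixes V :: "'v set" and E :: "'v \<Rightarrow> 'v \<Rightarrow> bool" and od :: "'v \<Rightarrow> nat"
  assumes symE: "E a b \<Longrightarrow> E b a" and irrE: "\<not> E a a"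
    and EV: "E a b \<Longrightarrow> a \<in> V \<and> b \<in> V"
begin

abbreviation geq where "geq \<equiv> gp_eq V E od"
abbreviation LV where "LV \<equiv> lists (letters V)"

lemma geq_lists: "geq w w' \<Longrightarrow> w \<in> LV \<and> w' \<in> LV"
  by (induction rule: gp_eq.induct) (auto simp: letters_def dest: EV)

lemma geq_refl[intro]: "w \<in> LV \<Longrightarrow> geq w w" by (rule gp_refl)
lemma geq_sym: "geq w w' \<Longrightarrow> geq w' w" by (rule gp_sym)
lemma geq_trans[trans]: "geq w w' \<Longrightarrow> geq w' w'' \<Longrightarrow> geq w w''" by (rule gp_trans)

lemma geq_ctxt: "geq w w' \<Longrightarrow> a \<in> LV \<Longrightarrow> b \<in> LV \<Longrightarrow> geq (a @ w @ b) (a @ w' @ b)"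
  by (rule gp_ctxt)

lemma geq_app: "geq a a' \<Longrightarrow> geq b b' \<Longrightarrow> geq (a @ b) (a' @ b')"
proof -
  assume 1: "geq a a'" and 2: "geq b b'"
  have "geq ([] @ a @ b) ([] @ a' @ b)" using 1 2 geq_lists by (intro geq_ctxt) auto
  moreover have "geq (a' @ b @ []) (a' @ b' @ [])" using 1 2 geq_lists by (intro geq_ctxt) auto
  ultimately show ?thesis by (auto intro: geq_trans)
qed

lemma geq_cons: "geq b b' \<Longrightarrow> x \<in> letters V \<Longrightarrow> geq (x # b) (x # b')"
proof -
  assume a: "geq b b'" "x \<in> letters V"
  have "geq [x] [x]" using a by (intro geq_refl) auto
  then show ?thesis using geq_app[of "[x]" "[x]" b b'] a by auto
qed

definition linv :: "'v letter list \<Rightarrow> 'v letter list" where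
  "linv X = rev (map (\<lambda>(v,b). (v, \<not> b)) X)"

lemma linv_lists: "X \<in> LV \<Longrightarrow> linv X \<in> LV"
  by (auto simp: linv_def letters_def)

lemma cancel1: "v \<in> V \<Longrightarrow> geq ([(v,s)] @ Y @ [(v, \<not>s)]) Y \<Longrightarrow> True" by simp

lemma letter_cancel: "x \<in> letters V \<Longrightarrow> geq [x, (fst x, \<not> snd x)] []"
  by (cases x) (auto simp: letters_def intro: gp_cancel)

lemma linv_cancel: "X \<in> LV \<Longrightarrow> geq (X @ linv X) []"
proof (induction X)
  case Nil then show ?case by (auto simp: linv_def)
next
  case (Cons x X)
  have "x # X @ linv X @ [(fst x, \<not> snd x)] = [x] @ (X @ linv X) @ [(fst x, \<not> snd x)]" by simp
  have "geq ([x] @ (X @ linv X) @ [(fst x, \<not> snd x)]) ([x] @ [] @ [(fst x, \<not> snd x)])"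
    using Cons by (intro geq_ctxt) (auto simp: letters_def)
  also have "geq ([x] @ [] @ [(fst x, \<not> snd x)]) []" using letter_cancel Cons by auto
  finally show ?case by (cases x) (simp add: linv_def)
qed

lemma linv_linv: "linv (linv X) = X"
  by (induction X) (auto simp: linv_def)

lemma linv_cancel2: "X \<in> LV \<Longrightarrow> geq (linv X @ X) []"
  using linv_cancel[of "linv X"] linv_lists linv_linv by metis

lemma cancel_left: "geq (X @ Y) (X @ Z) \<Longrightarrow> geq Y Z"
proof -
  assume h: "geq (X @ Y) (X @ Z)"
  have "X @ Y \<in> LV \<and> X @ Z \<in> LV" using geq_lists[OF h] .
  then have X: "X \<in> LV" and Y: "Y \<in> LV" and Z: "Z \<in> LV" by auto
  have "geq Y ((linv X @ X) @ Y)" using geq_app[OF geq_sym[OF linv_cancel2[OF X]] geq_refl[OF Y]] by simp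
  also have "geq ((linv X @ X) @ Y) (linv X @ (X @ Z))"
    using geq_app[OF geq_refl[OF linv_lists[OF X]] h] by simp
  also have "geq (linv X @ (X @ Z)) Z"
    using geq_app[OF linv_cancel2[OF X] geq_refl[OF Z]] by simp
  finally show ?thesis .
qed

lemma cancel_right: "geq (Y @ X) (Z @ X) \<Longrightarrow> geq Y Z"
proof -
  assume h: "geq (Y @ X) (Z @ X)"
  have "Y @ X \<in> LV \<and> Z @ X \<in> LV" using geq_lists[OF h] .
  then have X: "X \<in> LV" and Y: "Y \<in> LV" and Z: "Z \<in> LV" by auto
  have "geq Y (Y @ (X @ linv X))" using geq_app[OF geq_refl[OF Y] geq_sym[OF linv_cancel[OF X]]] by simp
  also have "geq (Y @ (X @ linv X)) ((Z @ X) @ linv X)"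
    using geq_app[OF h geq_refl[OF linv_lists[OF X]]] by simp
  also have "geq ((Z @ X) @ linv X) Z"
    using geq_app[OF geq_refl[OF Z] linv_cancel[OF X]] by simp
  finally show ?thesis .
qed

definition lcomm where "lcomm x y \<longleftrightarrow> geq [x, y] [y, x]"

lemma comm_one: "x \<in> letters V \<Longrightarrow> Y \<in> LV \<Longrightarrow> (\<forall>y\<in>set Y. lcomm x y) \<Longrightarrow> geq (x # Y) (Y @ [x])"
proof (induction Y)
  case Nil then show ?case by auto
next
  case (Cons y Y)
  have 1: "geq (x#y#Y) (y#x#Y)"
    using geq_ctxt[of "[x,y]" "[y,x]" "[]" Y] Cons by (auto simp: lcomm_def)
  have 2: "geq (y#x#Y) (y#(Y@[x]))" using geq_cons Cons by auto
  show ?case using geq_trans[OF 1 2] by simp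
qed

lemma comm_block: "X \<in> LV \<Longrightarrow> Y \<in> LV \<Longrightarrow> (\<forall>x\<in>set X. \<forall>y\<in>set Y. lcomm x y) \<Longrightarrow> geq (X @ Y) (Y @ X)"
proof (induction X)
  case Nil then show ?case by auto
next
  case (Cons x X)
  have 1: "geq (x # X @ Y) (x # Y @ X)"
    using Cons by (intro geq_cons) auto
  have 2: "geq ((x # Y) @ X) ((Y @ [x]) @ X)"
    using Cons geq_app[OF comm_one geq_refl[of X]] by auto
  from 2 have "geq (x # Y @ X) (Y @ x # X)" by simp
  from geq_trans[OF 1 this] show ?case by simp
qed

lemma lcomm_E: "E v v' \<Longrightarrow> lcomm (v,s) (v',s')"
  unfolding lcomm_def by (rule gp_comm)

lemma lcomm_same: "v \<in> V \<Longrightarrow> lcomm (v,s) (v,s')"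
proof (cases "s = s'")
  case True
  assume "v \<in> V" then show ?thesis using True by (auto simp: lcomm_def letters_def)
next
  case False
  assume v: "v \<in> V"
  have 1: "geq [(v,s),(v,s')] []" using gp_cancel[where s=s, OF v] False by (cases s; cases s') auto
  have 2: "geq [(v,s'),(v,s)] []" using gp_cancel[where s=s', OF v] False by (cases s; cases s') auto
  show ?thesis unfolding lcomm_def using geq_trans[OF 1 geq_sym[OF 2]] .
qed

definition del :: "'v set \<Rightarrow> 'v letter list \<Rightarrow> 'v letter list" where
  "del T w = filter (\<lambda>x. fst x \<in> T) w"

lemma del_lists: "w \<in> LV \<Longrightarrow> del T w \<in> LV" by (auto simp: del_def)

lemma geq_del: "geq w w' \<Longrightarrow> geq (del T w) (del T w')"
proof (induction rule: gp_eq.induct)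
  case (gp_refl w) then show ?case by (intro geq_refl del_lists)
next
  case (gp_sym w w') then show ?case using geq_sym by blast
next
  case (gp_trans w w' w'') then show ?case using geq_trans by blast
next
  case (gp_ctxt w w' a b) then show ?case
    by (auto simp: del_def intro!: geq_ctxt[simplified del_def] del_lists[simplified del_def])
next
  case (gp_cancel v s) then show ?case by (auto simp: del_def intro: gp_eq.gp_cancel)
next
  case (gp_order v) then show ?case
    by (auto simp: del_def filter_replicate intro: gp_eq.gp_order)
next
  case (gp_comm v v' s s') then show ?case
    using EV[OF gp_comm] by (auto simp: del_def letters_def intro: gp_eq.gp_comm)
qed

lemma reduced_in: "reduced_word V E od w \<Longrightarrow> geq w x \<Longrightarrow> x \<in> lists (letters T) \<Longrightarrow> fst ` set w \<subseteq> T"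
proof -
  assume r: "reduced_word V E od w" and g: "geq w x" and x: "x \<in> lists (letters T)"
  have "del T x = x" using x unfolding del_def by (intro filter_True) (auto simp: letters_def)
  then have "geq (del T w) x" using geq_del[OF g, of T] by simp
  then have "geq w (del T w)" using g geq_sym geq_trans by blast
  then have "length w \<le> length (del T w)" using r by (auto simp: reduced_word_def)
  then show ?thesis unfolding del_def using length_filter_less[of _ w "\<lambda>x. fst x \<in> T"]
    by force
qed

end


context GP begin

definition nn :: "'v \<Rightarrow> int" where "nn v = int (od v)"

fun fa :: "('v \<times> int) list \<Rightarrow> 'v set" where
  "fa [] = {}"
| "fa (s # r) = insert (fst s) {x \<in> fa r. E x (fst s)}"

fun getk :: "'v \<Rightarrow> ('v \<times> int) list \<Rightarrow> int" where
  "getk v [] = 0" | "getk v (s # r) = (if fst s = v then snd s else getk v r)"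

fun rmv :: "'v \<Rightarrow> ('v \<times> int) list \<Rightarrow> ('v \<times> int) list" where
  "rmv v [] = []" | "rmv v (s # r) = (if fst s = v then r else s # rmv v r)"

fun red :: "('v \<times> int) list \<Rightarrow> bool" where
  "red [] = True"
| "red (s # r) = (snd s \<noteq> 0 \<and> snd s mod nn (fst s) = snd s \<and> fst s \<notin> fa r \<and> red r)"

definition L :: "'v \<Rightarrow> int \<Rightarrow> ('v \<times> int) list \<Rightarrow> ('v \<times> int) list" where
  "L v e w = (if v \<in> fa w then
       (if (getk v w + e) mod nn v = 0 then rmv v w else (v, (getk v w + e) mod nn v) # rmv v w)
     else (if e mod nn v = 0 then w else (v, e mod nn v) # w))"

inductive swp :: "('v \<times> int) list \<Rightarrow> ('v \<times> int) list \<Rightarrow> bool" where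
  swpI: "E (fst s) (fst t) \<Longrightarrow> swp (p @ [s, t] @ q) (p @ [t, s] @ q)"

abbreviation sh where "sh \<equiv> swp\<^sup>*\<^sup>*"

lemma fa_app: "fa (X @ Y) = fa X \<union> {x \<in> fa Y. \<forall>t\<in>set X. E x (fst t)}"
  by (induction X) auto

lemma fa_vert: "fa w \<subseteq> fst ` set w"
  by (induction w) auto

lemma swp_sym: "swp w w' \<Longrightarrow> swp w' w"
proof (induction rule: swp.induct)
  case (swpI s t p q) show ?case using swp.swpI[of t s p q] symE[OF swpI] by simp
qed

lemma sh_sym: "sh w w' \<Longrightarrow> sh w' w"
proof (induction rule: rtranclp_induct)
  case base then show ?case by simp
next
  case (step y z) then show ?case by (meson converse_rtranclp_into_rtranclp swp_sym)
qed

lemma sh_trans: "sh a b \<Longrightarrow> sh b c \<Longrightarrow> sh a c" by (rule rtranclp_trans)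

lemma swp_cons: "swp w w' \<Longrightarrow> swp (a # w) (a # w')"
  by (induction rule: swp.induct) (metis append_Cons swpI)

lemma sh_cons: "sh w w' \<Longrightarrow> sh (a # w) (a # w')"
  by (induction rule: rtranclp_induct) (auto intro: rtranclp.rtrancl_into_rtrancl swp_cons)

lemma swp_app: "swp w w' \<Longrightarrow> swp (p @ w) (p @ w')"
  by (induction rule: swp.induct) (metis append_assoc swpI)

lemma sh_app: "sh w w' \<Longrightarrow> sh (p @ w) (p @ w')"
  by (induction rule: rtranclp_induct) (auto intro: rtranclp.rtrancl_into_rtrancl swp_app)

lemma fa_two: "E (fst s) (fst t) \<Longrightarrow> fa (s # t # q) = fa (t # s # q)"
  using symE by auto

lemma red_app_cong: "fa X = fa Y \<Longrightarrow> red X = red Y \<Longrightarrow> red (p @ X) = red (p @ Y)"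
  by (induction p) (auto simp: fa_app)

lemma red_two: "E (fst s) (fst t) \<Longrightarrow> red (s # t # q) = red (t # s # q)"
  using symE irrE by auto

lemma getk_app: "getk v (p @ X) = (if v \<in> fst ` set p then getk v p else getk v X)"
  by (induction p) auto

lemma rmv_app: "rmv v (p @ X) = (if v \<in> fst ` set p then rmv v p @ X else p @ rmv v X)"
  by (induction p) auto

lemma swp_inv: "swp w w' \<Longrightarrow> fa w = fa w' \<and> red w = red w' \<and> getk v w = getk v w'
   \<and> fst ` set w = fst ` set w' \<and> sh (rmv v w) (rmv v w')"
proof (induction rule: swp.induct)
  case (swpI s t p q)
  have ne: "fst s \<noteq> fst t" using swpI irrE by metis
  have 1: "fa (p @ [s, t] @ q) = fa (p @ [t, s] @ q)" using fa_two[OF swpI] by (simp add: fa_app)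
  have 2: "red (p @ [s, t] @ q) = red (p @ [t, s] @ q)"
    using red_app_cong[of "[s, t] @ q" "[t, s] @ q" p] fa_two[OF swpI] red_two[OF swpI] by simp
  have 3: "getk v (p @ [s, t] @ q) = getk v (p @ [t, s] @ q)"
    using ne by (cases "fst s = v"; cases "fst t = v") (auto simp: getk_app)
  have 4: "sh (rmv v (p @ [s, t] @ q)) (rmv v (p @ [t, s] @ q))"
  proof (cases "v \<in> fst ` set p")
    case True
    then show ?thesis using swp.swpI[OF swpI, of "rmv v p" q] by (simp add: rmv_app)
  next
    case False
    have "sh (rmv v ([s, t] @ q)) (rmv v ([t, s] @ q))"
      using ne swp.swpI[OF swpI, of "[]" "rmv v q"] by auto
    then show ?thesis using False sh_app by (simp add: rmv_app)
  qed
  show ?case using 1 2 3 4 by auto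
qed

lemma sh_inv: "sh w w' \<Longrightarrow> fa w = fa w' \<and> (red w = red w') \<and> getk v w = getk v w'
   \<and> fst ` set w = fst ` set w' \<and> sh (rmv v w) (rmv v w')"
proof (induction rule: rtranclp_induct)
  case base then show ?case by simp
next
  case (step y z) then show ?case using swp_inv[OF step(2), of v] by (auto intro: sh_trans)
qed

lemma fa_move: "v \<in> fa w \<Longrightarrow> sh w ((v, getk v w) # rmv v w)"
proof (induction w)
  case Nil then show ?case by simp
next
  case (Cons s r)
  show ?case
  proof (cases "fst s = v")
    case True then show ?thesis by (cases s) auto
  next
    case False
    then have v: "v \<in> fa r" "E v (fst s)" using Cons by auto
    have "sh (s # r) (s # (v, getk v r) # rmv v r)" using Cons v sh_cons by auto
    moreover have "swp (s # (v, getk v r) # rmv v r) ((v, getk v r) # s # rmv v r)"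
      using swpI[of "s" "(v, getk v r)" "[]" "rmv v r"] symE[OF v(2)] by simp
    ultimately show ?thesis using False by (auto intro: rtranclp.rtrancl_into_rtrancl)
  qed
qed

lemma fa_rmv_E: "E x v \<Longrightarrow> x \<in> fa (rmv v w) \<longleftrightarrow> x \<in> fa w"
  using irrE by (induction w) auto

lemma red_rmv: "red w \<Longrightarrow> v \<in> fa w \<Longrightarrow> red (rmv v w) \<and> v \<notin> fa (rmv v w)"
proof (induction w)
  case Nil then show ?case by simp
next
  case (Cons s r)
  show ?case
  proof (cases "fst s = v")
    case True then show ?thesis using Cons by auto
  next
    case False
    then have v: "v \<in> fa r" "E v (fst s)" using Cons by auto
    have "fst s \<notin> fa (rmv v r)" using fa_rmv_E[OF symE[OF v(2)]] Cons by auto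
    then show ?thesis using Cons False v by auto
  qed
qed

lemma getk_red: "red w \<Longrightarrow> v \<in> fa w \<Longrightarrow> getk v w \<noteq> 0 \<and> getk v w mod nn v = getk v w"
  by (induction w) auto

lemma red_L: "red w \<Longrightarrow> red (L v e w)"
  unfolding L_def using red_rmv by (auto simp: Let_def)

lemma vert_rmv: "fst ` set (rmv v w) \<subseteq> fst ` set w"
  by (induction w) auto

lemma vert_L: "fst ` set (L v e w) \<subseteq> insert v (fst ` set w)"
  unfolding L_def using vert_rmv by auto

lemma L_mod: "L v (e mod nn v) w = L v e w"
  unfolding L_def by (simp add: mod_add_right_eq)

lemma L_L: "red w \<Longrightarrow> L v e (L v e' w) = L v (e + e') w"
proof -
  assume r: "red w"
  show ?thesis
  proof (cases "v \<in> fa w")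
    case True
    note g = getk_red[OF r True]
    note rr = red_rmv[OF r True]
    show ?thesis
    proof (cases "(getk v w + e') mod nn v = 0")
      case True
      then have "(getk v w + (e + e')) mod nn v = e mod nn v"
        by (metis (no_types, lifting) add.commute add.left_commute add_0 mod_add_left_eq)
      then show ?thesis using True \<open>v \<in> fa w\<close> rr unfolding L_def by auto
    next
      case False
      have k: "((getk v w + e') mod nn v + e) mod nn v = (getk v w + (e + e')) mod nn v"
        unfolding mod_add_left_eq by (simp add: ac_simps)
      show ?thesis using False \<open>v \<in> fa w\<close> unfolding L_def k[symmetric]
        by auto
    qed
  next
    case False
    then show ?thesis unfolding L_def
      by (auto simp: mod_add_left_eq mod_add_right_eq add_ac dvd_add_left_iff dvd_add_right_iff)
  qed
qed

lemma L_0: "red w \<Longrightarrow> sh (L v 0 w) w"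
proof -
  assume r: "red w"
  show ?thesis
  proof (cases "v \<in> fa w")
    case True
    then show ?thesis using getk_red[OF r True] fa_move[OF True] sh_sym unfolding L_def by auto
  next
    case False then show ?thesis unfolding L_def by auto
  qed
qed

lemma L_sh: "sh w w' \<Longrightarrow> sh (L v e w) (L v e w')"
proof -
  assume s: "sh w w'"
  note i = sh_inv[OF s, of v]
  show ?thesis unfolding L_def using i s by (auto intro: sh_cons)
qed

lemma getk_rmv: "x \<noteq> v \<Longrightarrow> getk x (rmv v w) = getk x w"
  by (induction w) auto

lemma rmv_rmv: "rmv x (rmv v w) = rmv v (rmv x w)"
  by (induction w) auto

lemma L_comm: "E v v' \<Longrightarrow> sh (L v e (L v' e' w)) (L v' e' (L v e w))"
proof -
  assume E: "E v v'"
  have ne: "v \<noteq> v'" using E irrE by metis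
  have E': "E v' v" using symE[OF E] .
  have faR: "\<And>R k. v \<in> fa ((v', k) # R) \<longleftrightarrow> v \<in> fa R" using ne E by auto
  have faR': "\<And>R k. v' \<in> fa ((v, k) # R) \<longleftrightarrow> v' \<in> fa R" using ne E' by auto
  have sw: "\<And>a b R. fst a = v \<Longrightarrow> fst b = v' \<Longrightarrow> sh (a # b # R) (b # a # R)"
    using swpI[of _ _ "[]"] E by auto
  note fr = fa_rmv_E[OF E] fa_rmv_E[OF E']
  note gr = getk_rmv[OF ne] getk_rmv[OF ne[symmetric]]
  show ?thesis
    unfolding L_def using ne faR faR' fr gr rmv_rmv[of v v'] sw
    by (auto simp: Let_def)
qed

end


context GP begin

fun act :: "'v letter list \<Rightarrow> ('v \<times> int) list \<Rightarrow> ('v \<times> int) list" where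
  "act [] w = w" | "act (x # xs) w = L (fst x) (if snd x then 1 else -1) (act xs w)"

definition pw :: "'v \<Rightarrow> int \<Rightarrow> 'v letter list" where
  "pw v k = (if k \<ge> 0 then replicate (nat k) (v, True) else replicate (nat (-k)) (v, False))"

definition expand :: "('v \<times> int) list \<Rightarrow> 'v letter list" where
  "expand w = concat (map (\<lambda>s. pw (fst s) (snd s)) w)"

lemma expand_simps[simp]: "expand [] = []" "expand (s # r) = pw (fst s) (snd s) @ expand r"
  "expand (X @ Y) = expand X @ expand Y"
  by (auto simp: expand_def)

lemma act_app: "act (a @ b) w = act a (act b w)"
  by (induction a) auto

lemma red_act: "red w \<Longrightarrow> red (act x w)"
  by (induction x) (auto intro: red_L)

lemma act_sh: "sh w w' \<Longrightarrow> sh (act x w) (act x w')"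
  by (induction x) (auto intro: L_sh)

lemma vert_act: "fst ` set (act x w) \<subseteq> fst ` set x \<union> fst ` set w"
proof (induction x)
  case (Cons a x)
  have "fst ` set (act (a # x) w) \<subseteq> insert (fst a) (fst ` set (act x w))"
    using vert_L by simp
  moreover have "insert (fst a) (fst ` set (act x w)) \<subseteq> fst ` set (a # x) \<union> fst ` set w"
    using Cons by auto
  ultimately show ?case by blast
qed simp

lemma act_rep: "red w \<Longrightarrow> act (replicate (Suc m) (v, b)) w = L v (int (Suc m) * (if b then 1 else -1)) w"
proof (induction m)
  case 0 then show ?case by simp
next
  case (Suc m)
  have "act (replicate (Suc (Suc m)) (v, b)) w = act ((v, b) # replicate (Suc m) (v, b)) w"
    by (simp only: replicate_Suc)
  also have "\<dots> = L v (if b then 1 else -1) (act (replicate (Suc m) (v, b)) w)"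
    by (simp only: act.simps fst_conv snd_conv)
  also have "\<dots> = L v (if b then 1 else -1) (L v (int (Suc m) * (if b then 1 else -1)) w)"
    by (simp only: Suc.IH[OF Suc.prems])
  also have "\<dots> = L v ((if b then 1 else -1) + int (Suc m) * (if b then 1 else -1)) w"
    by (rule L_L[OF Suc.prems])
  also have "(if b then 1 else -1) + int (Suc m) * (if b then 1 else -1) = int (Suc (Suc m)) * (if b then 1 else (-1::int))"
    by (simp add: algebra_simps)
  finally show ?case .
qed

lemma compat: "geq x y \<Longrightarrow> red w \<Longrightarrow> sh (act x w) (act y w)"
proof (induction arbitrary: w rule: gp_eq.induct)
  case (gp_refl w) then show ?case by simp
next
  case (gp_sym w w') then show ?case using sh_sym by blast
next
  case (gp_trans w w' w'') then show ?case using sh_trans by blast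
next
  case (gp_ctxt w w' a b x)
  have "sh (act w (act b x)) (act w' (act b x))" using gp_ctxt red_act by blast
  then show ?case by (simp add: act_app act_sh)
next
  case (gp_cancel v s w)
  have "act [(v, s), (v, \<not> s)] w = L v 0 w"
    using L_L[OF gp_cancel(2)] by (cases s) auto
  then show ?case using L_0[OF gp_cancel(2)] by simp
next
  case (gp_order v w)
  then obtain m where m: "od v = Suc m" by (cases "od v") auto
  have "act (replicate (Suc m) (v, True)) w = L v (int (Suc m) * 1) w" using act_rep[OF gp_order(3), of m v True] by simp
  then have "act (replicate (od v) (v, True)) w = L v (int (od v)) w" using m by simp
  also have "\<dots> = L v 0 w" using L_mod[of v "int (od v)"] L_mod[of v 0] by (simp add: nn_def)
  finally show ?case using L_0[OF gp_order(3)] by simp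
next
  case (gp_comm v v' s s' w)
  then show ?case using L_comm[OF gp_comm(1)] by simp
qed

lemma pw_zero[simp]: "pw v 0 = []" by (simp add: pw_def)
lemma pw_one: "pw v 1 = [(v, True)]" by (simp add: pw_def)
lemma pw_mone: "pw v (-1) = [(v, False)]" by (simp add: pw_def)
lemma pw_set: "set (pw v k) \<subseteq> {v} \<times> UNIV" by (auto simp: pw_def)
lemma pw_lists: "v \<in> V \<Longrightarrow> pw v k \<in> LV" by (auto simp: pw_def letters_def)
lemma pw_vert: "k \<noteq> 0 \<Longrightarrow> fst ` set (pw v k) = {v}" by (auto simp: pw_def)

lemma rep_lists: "v \<in> V \<Longrightarrow> replicate a (v, s) \<in> LV" by (auto simp: letters_def)

lemma canc_rep: "v \<in> V \<Longrightarrow>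
  geq (replicate (Suc a) (v, s) @ replicate (Suc b) (v, \<not>s)) (replicate a (v, s) @ replicate b (v, \<not>s))"
proof -
  assume v: "v \<in> V"
  have e: "replicate (Suc a) (v, s) @ replicate (Suc b) (v, \<not>s) = replicate a (v, s) @ [(v,s), (v, \<not>s)] @ replicate b (v, \<not>s)"
    by (simp add: replicate_append_same[symmetric])
  show ?thesis unfolding e using geq_ctxt[OF gp_cancel[OF v] rep_lists[OF v] rep_lists[OF v]] by simp
qed

lemma canc_gen: "v \<in> V \<Longrightarrow>
  geq (replicate a (v, s) @ replicate b (v, \<not>s)) (if b \<le> a then replicate (a - b) (v, s) else replicate (b - a) (v, \<not>s))"
proof (induction b arbitrary: a)
  case 0 then show ?case using geq_refl[OF rep_lists[OF 0]] by simp
next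
  case (Suc b)
  show ?case
  proof (cases a)
    case 0 then show ?thesis using geq_refl[OF rep_lists[OF Suc(2), of "Suc b" "\<not>s"]] by simp
  next
    case (Suc a')
    then show ?thesis using geq_trans[OF canc_rep[OF \<open>v \<in> V\<close>] Suc.IH[OF \<open>v \<in> V\<close>, of a']]
      by (cases "b \<le> a'") auto
  qed
qed

lemma pw_add: "v \<in> V \<Longrightarrow> geq (pw v j @ pw v k) (pw v (j + k))"
proof -
  assume v: "v \<in> V"
  consider "j \<ge> 0" "k \<ge> 0" | "j < 0" "k < 0" | "j \<ge> 0" "k < 0" | "j < 0" "k \<ge> 0" by linarith
  then show ?thesis
  proof cases
    case 1
    then have "pw v j @ pw v k = pw v (j + k)" by (simp add: pw_def replicate_add[symmetric] nat_add_distrib)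
    then show ?thesis using pw_lists[OF v] by auto
  next
    case 2
    then have "pw v j @ pw v k = pw v (j + k)" by (simp add: pw_def replicate_add[symmetric] nat_add_distrib)
    then show ?thesis using pw_lists[OF v] by auto
  next
    case 3
    have "geq (pw v j @ pw v k) (if nat (-k) \<le> nat j then replicate (nat j - nat (-k)) (v, True) else replicate (nat (-k) - nat j) (v, \<not>True))"
      using canc_gen[OF v, of "nat j" True "nat (-k)"] 3 by (simp add: pw_def)
    moreover have "(if nat (-k) \<le> nat j then replicate (nat j - nat (-k)) (v, True) else replicate (nat (-k) - nat j) (v, \<not>True)) = pw v (j + k)"
      using 3 by (auto simp: pw_def nat_diff_distrib) 
    ultimately show ?thesis by simp
  next
    case 4
    have "geq (pw v j @ pw v k) (if nat k \<le> nat (-j) then replicate (nat (-j) - nat k) (v, False) else replicate (nat k - nat (-j)) (v, \<not>False))"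
      using canc_gen[OF v, of "nat (-j)" False "nat k"] 4 by (simp add: pw_def)
    moreover have "(if nat k \<le> nat (-j) then replicate (nat (-j) - nat k) (v, False) else replicate (nat k - nat (-j)) (v, \<not>False)) = pw v (j + k)"
      using 4 by (auto simp: pw_def nat_diff_distrib) 
    ultimately show ?thesis by simp
  qed
qed

lemma pw_shift: "v \<in> V \<Longrightarrow> geq (pw v (k + nn v)) (pw v k)"
proof -
  assume v: "v \<in> V"
  show ?thesis
  proof (cases "od v = 0")
    case True then show ?thesis using geq_refl[OF pw_lists[OF v]] by (simp add: nn_def)
  next
    case False
    have o: "geq (pw v (nn v)) []" using gp_order[OF v] False by (simp add: pw_def nn_def)
    have "geq (pw v (k + nn v)) (pw v k @ pw v (nn v))" using geq_sym[OF pw_add[OF v]] .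
    also have "geq (pw v k @ pw v (nn v)) (pw v k @ [])" using geq_app[OF geq_refl[OF pw_lists[OF v]] o] .
    finally show ?thesis by simp
  qed
qed

lemma pw_mult: "v \<in> V \<Longrightarrow> geq (pw v (k + z * nn v)) (pw v k)"
proof (induction z rule: int_induct[where k=0])
  case base then show ?case using geq_refl[OF pw_lists] by simp
next
  case (step1 i)
  have "pw v (k + (i + 1) * nn v) = pw v ((k + i * nn v) + nn v)" by (simp add: algebra_simps)
  then show ?case using geq_trans[OF pw_shift[OF step1(3)] step1(2)[OF step1(3)]] by simp
next
  case (step2 i)
  have a: "geq (pw v (k + (i - 1) * nn v)) (pw v (k + i * nn v))"
    using geq_sym[OF pw_shift[OF step2(3), of "k + (i - 1) * nn v"]] by (simp add: algebra_simps)
  show ?case using geq_trans[OF a step2(2)[OF step2(3)]] .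
qed

lemma pw_mod: "v \<in> V \<Longrightarrow> geq (pw v (k mod nn v)) (pw v k)"
proof -
  assume v: "v \<in> V"
  have "k mod nn v = k + (- (k div nn v)) * nn v" by (simp add: minus_div_mult_eq_mod[symmetric])
  then show ?thesis using pw_mult[OF v, of k "- (k div nn v)"] by simp
qed

lemma expand_lists: "fst ` set w \<subseteq> V \<Longrightarrow> expand w \<in> LV"
proof (induction w)
  case (Cons s w)
  have "pw (fst s) (snd s) \<in> LV" using Cons by (intro pw_lists) auto
  moreover have "expand w \<in> LV" using Cons by auto
  ultimately show ?case by simp
qed simp

lemma vert_expand: "red w \<Longrightarrow> fst ` set (expand w) = fst ` set w"
proof (induction w)
  case (Cons s w)
  have "fst ` set (pw (fst s) (snd s)) = {fst s}" using Cons by (intro pw_vert) auto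
  then show ?case using Cons by (simp add: image_Un)
qed simp

lemma vert_expand_sub: "fst ` set (expand w) \<subseteq> fst ` set w"
proof (induction w)
  case (Cons s w)
  have "fst ` set (pw (fst s) (snd s)) \<subseteq> {fst s}" by (auto simp: pw_def)
  then show ?case using Cons by (auto simp: image_Un)
qed simp

lemma pw_fst: "x \<in> set (pw v k) \<Longrightarrow> fst x = v"
  by (auto simp: pw_def split: if_splits)

lemma expand_swp: "swp w w' \<Longrightarrow> fst ` set w \<subseteq> V \<Longrightarrow> geq (expand w) (expand w')"
proof (induction rule: swp.induct)
  case (swpI s t p q)
  have st: "fst s \<in> V" "fst t \<in> V" using swpI(2) by auto
  have pq: "fst ` set p \<subseteq> V" "fst ` set q \<subseteq> V" using swpI(2) by auto
  have lc: "\<forall>x\<in>set (pw (fst s) (snd s)). \<forall>y\<in>set (pw (fst t) (snd t)). lcomm x y"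
  proof (intro ballI)
    fix x y assume "x \<in> set (pw (fst s) (snd s))" "y \<in> set (pw (fst t) (snd t))"
    then have "fst x = fst s" "fst y = fst t" using pw_fst by blast+
    then show "lcomm x y" using lcomm_E[OF swpI(1)] by (cases x, cases y) simp
  qed
  have c: "geq (pw (fst s) (snd s) @ pw (fst t) (snd t)) (pw (fst t) (snd t) @ pw (fst s) (snd s))"
    using comm_block[OF pw_lists[OF st(1)] pw_lists[OF st(2)] lc] .
  have "geq (expand p @ (pw (fst s) (snd s) @ pw (fst t) (snd t)) @ expand q) (expand p @ (pw (fst t) (snd t) @ pw (fst s) (snd s)) @ expand q)"
    using geq_ctxt[OF c expand_lists[OF pq(1)] expand_lists[OF pq(2)]] .
  then show ?case by simp
qed

lemma expand_sh: "sh w w' \<Longrightarrow> fst ` set w \<subseteq> V \<Longrightarrow> geq (expand w) (expand w')"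
proof (induction rule: rtranclp_induct)
  case base then show ?case using geq_refl[OF expand_lists] by simp
next
  case (step y z)
  have e: "fst ` set w = fst ` set y" using sh_inv[OF step(1), of undefined] by blast
  have yV: "fst ` set y \<subseteq> V" using e step(4) by simp
  show ?case using geq_trans[OF step(3)[OF step(4)] expand_swp[OF step(2) yV]] .
qed

lemma sound_L: "red w \<Longrightarrow> v \<in> V \<Longrightarrow> fst ` set w \<subseteq> V \<Longrightarrow> geq (expand (L v e w)) (pw v e @ expand w)"
proof -
  assume r: "red w" and v: "v \<in> V" and wV: "fst ` set w \<subseteq> V"
  show ?thesis
  proof (cases "v \<in> fa w")
    case True
    obtain k R where kR: "k = getk v w" "R = rmv v w" by blast
    have RV: "fst ` set R \<subseteq> V" using vert_rmv wV kR by blast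
    have 1: "geq (expand w) (pw v k @ expand R)"
      using expand_sh[OF fa_move[OF True] wV] kR by simp
    have 2: "expand (L v e w) = pw v ((k + e) mod nn v) @ expand R"
      unfolding L_def using True kR by simp
    have a: "geq (pw v ((k + e) mod nn v)) (pw v (e + k))"
      using pw_mod[OF v, of "e + k"] by (simp add: add.commute)
    have b: "geq (pw v (e + k)) (pw v e @ pw v k)" using geq_sym[OF pw_add[OF v, of e k]] .
    have c: "geq (pw v ((k + e) mod nn v) @ expand R) ((pw v e @ pw v k) @ expand R)"
      using geq_app[OF geq_trans[OF a b] geq_refl[OF expand_lists[OF RV]]] .
    have d: "geq ((pw v e @ pw v k) @ expand R) (pw v e @ expand w)"
      using geq_app[OF geq_refl[OF pw_lists[OF v]] geq_sym[OF 1]] by simp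
    show ?thesis using geq_trans[OF c d] 2 by simp
  next
    case False
    then have "expand (L v e w) = pw v (e mod nn v) @ expand w" unfolding L_def by auto
    then show ?thesis using geq_app[OF pw_mod[OF v] geq_refl[OF expand_lists[OF wV]]] by simp
  qed
qed

lemma sound_act: "x \<in> LV \<Longrightarrow> red w \<Longrightarrow> fst ` set w \<subseteq> V \<Longrightarrow> geq (expand (act x w)) (x @ expand w)"
proof (induction x)
  case Nil then show ?case using geq_refl[OF expand_lists] by simp
next
  case (Cons a x)
  have aV: "fst a \<in> V" using Cons by (auto simp: letters_def)
  have "fst ` set x \<subseteq> V" using Cons(2) by (auto simp: letters_def)
  then have xV: "fst ` set (act x w) \<subseteq> V" using vert_act[of x w] Cons(4) by blast
  have "geq (expand (act (a # x) w)) (pw (fst a) (if snd a then 1 else -1) @ expand (act x w))"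
    using sound_L[OF red_act[OF Cons(3)] aV xV] by simp
  also have "pw (fst a) (if snd a then 1 else -1) = [a]" by (cases a) (auto simp: pw_one pw_mone)
  finally have "geq (expand (act (a # x) w)) ([a] @ expand (act x w))" .
  also have "geq ([a] @ expand (act x w)) ([a] @ x @ expand w)"
    using Cons by (intro geq_app) auto
  finally show ?case by simp
qed

lemma act_pw: "red R \<Longrightarrow> v \<notin> fa R \<Longrightarrow> k \<noteq> 0 \<Longrightarrow> k mod nn v = k \<Longrightarrow> act (pw v k) R = (v, k) # R"
proof -
  assume r: "red R" "v \<notin> fa R" "k \<noteq> 0" "k mod nn v = k"
  obtain m b where mb: "pw v k = replicate (Suc m) (v, b)" "int (Suc m) * (if b then 1 else -1) = k"
  proof (cases "k > 0")
    case True
    then show ?thesis using that[of "nat k - 1" True] by (simp add: pw_def)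
  next
    case False
    then show ?thesis using that[of "nat (-k) - 1" False] r(3) by (simp add: pw_def)
  qed
  show ?thesis using act_rep[OF r(1)] mb r unfolding L_def by simp
qed

lemma act_expand: "red (N @ M) \<Longrightarrow> act (expand N) M = N @ M"
proof (induction N)
  case Nil then show ?case by simp
next
  case (Cons s N)
  then show ?case using act_pw[of "N @ M" "fst s" "snd s"] by (simp add: act_app)
qed

end


context GP begin

definition la :: "('v \<times> int) list \<Rightarrow> 'v set" where
  "la N = {fst s | s p q. N = p @ s # q \<and> (\<forall>t\<in>set q. E (fst s) (fst t))}"

lemma red_prefix: "red (X @ Y) \<Longrightarrow> red X"
proof (induction X)
  case (Cons s X)
  then show ?case by (simp add: fa_app)
qed simp

lemma red_UN: "red U \<Longrightarrow> red N \<Longrightarrow> (\<forall>v\<in>fst ` set U. v \<notin> fa N) \<Longrightarrow> red (U @ N)"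
proof (induction U)
  case (Cons s U)
  then show ?case by (simp add: fa_app)
qed simp

lemma la_cons: "la r \<subseteq> la (s # r)"
proof
  fix x assume "x \<in> la r"
  then obtain s' p q where "r = p @ s' # q" "\<forall>t\<in>set q. E (fst s') (fst t)" "x = fst s'"
    unfolding la_def by blast
  moreover have "s # r = (s # p) @ s' # q" using \<open>r = p @ s' # q\<close> by simp
  ultimately show "x \<in> la (s # r)" unfolding la_def by blast
qed

lemma la_hd: "\<forall>t\<in>set r. E (fst s) (fst t) \<Longrightarrow> fst s \<in> la (s # r)"
proof -
  assume h: "\<forall>t\<in>set r. E (fst s) (fst t)"
  have "s # r = [] @ s # r" by simp
  then show ?thesis using h unfolding la_def by blast
qed

lemma red_NU: "red N \<Longrightarrow> red U \<Longrightarrow> fa U \<inter> la N = {} \<Longrightarrow> red (N @ U)"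
proof (induction N)
  case (Cons s r)
  have "fa U \<inter> la r = {}" using Cons(4) la_cons[of r s] by blast
  then have IH: "red (r @ U)" using Cons(1,3) Cons(2) by simp
  have "fst s \<notin> fa (r @ U)"
  proof
    assume "fst s \<in> fa (r @ U)"
    then have "fst s \<in> fa r \<or> (fst s \<in> fa U \<and> (\<forall>t\<in>set r. E (fst s) (fst t)))" by (simp add: fa_app)
    then show False
    proof
      assume "fst s \<in> fa r" then show False using Cons(2) by simp
    next
      assume "fst s \<in> fa U \<and> (\<forall>t\<in>set r. E (fst s) (fst t))"
      then show False using la_hd[of r s] Cons(4) by blast
    qed
  qed
  then show ?case using IH Cons(2) by simp
qed simp

lemma move_end: "\<forall>t\<in>set q. E (fst s) (fst t) \<Longrightarrow> sh (s # q) (q @ [s])"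
proof (induction q)
  case (Cons t q)
  have "swp (s # t # q) (t # s # q)" using swpI[of s t "[]" q] Cons(2) by simp
  moreover have "sh (t # s # q) (t # q @ [s])" using Cons sh_cons by simp
  ultimately show ?case by (simp add: converse_rtranclp_into_rtranclp)
qed simp

lemma la_move: "v \<in> la N \<Longrightarrow> \<exists>p s q. fst s = v \<and> N = p @ s # q \<and> sh N (p @ q @ [s])"
proof -
  assume "v \<in> la N"
  then obtain s p q where h: "N = p @ s # q" "\<forall>t\<in>set q. E (fst s) (fst t)" "v = fst s"
    unfolding la_def by blast
  have "sh (p @ s # q) (p @ q @ [s])" using sh_app[OF move_end[OF h(2)]] by simp
  then show ?thesis using h by blast
qed

lemma length_rmv: "v \<in> fst ` set w \<Longrightarrow> length (rmv v w) < length w"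
  by (induction w) auto

lemma red_sh: "sh w w' \<Longrightarrow> red w \<Longrightarrow> red w'"
  using sh_inv[of w w' undefined] by simp

lemma vert_sh: "sh w w' \<Longrightarrow> fst ` set w = fst ` set w'"
  using sh_inv[of w w' undefined] by simp

lemma fa_sh: "sh w w' \<Longrightarrow> fa w = fa w'"
  using sh_inv[of w w' undefined] by simp

lemma main:
  assumes rU: "red U" and AV: "fst ` set U \<subseteq> V"
    and cl: "\<forall>a\<in>fst ` set U. \<forall>b\<in>fst ` set U. a \<noteq> b \<longrightarrow> E a b"
    and S: "S = fst ` set U \<union> {v \<in> V. \<forall>a\<in>fst ` set U. E v a}"
  shows "red N \<Longrightarrow> fst ` set N \<subseteq> V \<Longrightarrow> geq (expand N @ expand U) (expand U @ expand N) \<Longrightarrow> fst ` set N \<subseteq> S"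
proof (induction "length N" arbitrary: N rule: less_induct)
  case less
  note rN = less.prems(1) and NV = less.prems(2) and cm = less.prems(3)
  define A where "A = fst ` set U"
  have UL: "expand U \<in> LV" using expand_lists[OF AV] .
  have AS: "A \<subseteq> S" using S A_def by auto
  have pwc: "geq (pw v k @ expand U) (expand U @ pw v k)" if vS: "v \<in> S" for v k
  proof -
    have vS': "v \<in> A \<or> (v \<in> V \<and> (\<forall>a\<in>A. E v a))" using vS unfolding S A_def by blast
    have vV: "v \<in> V" using vS' AV unfolding A_def by blast
    have lc: "lcomm x y" if x: "x \<in> set (pw v k)" and y: "y \<in> set (expand U)" for x y
    proof -
      have fx: "fst x = v" using pw_fst[OF x] .
      have fy: "fst y \<in> A" using y vert_expand_sub[of U] unfolding A_def by blast
      show "lcomm x y"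
      proof (cases "fst y = v")
        case True
        then show ?thesis using lcomm_same[OF vV] fx by (cases x, cases y) simp
      next
        case False
        have "E v (fst y)"
        proof (cases "v \<in> A")
          case True
          have "\<forall>a\<in>A. \<forall>b\<in>A. a \<noteq> b \<longrightarrow> E a b" using cl unfolding A_def .
          then show ?thesis using True False fy by metis
        next
          case False then show ?thesis using vS' fy by blast
        qed
        then show ?thesis using lcomm_E fx by (cases x, cases y) simp
      qed
    qed
    show ?thesis by (rule comm_block[OF pw_lists[OF vV] UL]) (use lc in blast)
  qed
  show ?case
  proof (cases "fa N \<inter> S = {}")
    case False
    then obtain v where v: "v \<in> fa N" "v \<in> S" by blast
    define k where "k = getk v N"
    define R where "R = rmv v N"
    have shN: "sh N ((v, k) # R)" using fa_move[OF v(1)] k_def R_def by simp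
    have rR: "red R" using red_sh[OF shN rN] by simp
    have vN: "fst ` set N = insert v (fst ` set R)" using vert_sh[OF shN] by simp
    have RV: "fst ` set R \<subseteq> V" using vN NV by simp
    have lenR: "length R < length N" using length_rmv[of v N] fa_vert v(1) R_def by blast
    have vV: "v \<in> V" using vN NV by simp
    have eN: "geq (expand N) (pw v k @ expand R)" using expand_sh[OF shN NV] by simp
    let ?P = "pw v k" and ?X = "expand R" and ?U = "expand U"
    have PL: "?P \<in> LV" using pw_lists[OF vV] .
    have XL: "?X \<in> LV" using expand_lists[OF RV] .
    have "geq (?P @ ?X @ ?U) (expand N @ ?U)"
      using geq_app[OF geq_sym[OF eN] geq_refl[OF UL]] by simp
    also have "geq (expand N @ ?U) (?U @ expand N)" using cm .
    also have "geq (?U @ expand N) (?U @ ?P @ ?X)"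
      using geq_app[OF geq_refl[OF UL] eN] by simp
    also have "geq (?U @ ?P @ ?X) (?P @ ?U @ ?X)"
      using geq_app[OF geq_sym[OF pwc[OF v(2)]] geq_refl[OF XL]] by simp
    finally have "geq (?P @ ?X @ ?U) (?P @ ?U @ ?X)" .
    then have "geq (?X @ ?U) (?U @ ?X)" by (rule cancel_left)
    then have "fst ` set R \<subseteq> S" using less.hyps[OF lenR rR RV] by blast
    then show ?thesis using vN v(2) by simp
  next
    case fa0: True
    show ?thesis
    proof (cases "la N \<inter> S = {}")
      case False
      then obtain v where v: "v \<in> la N" "v \<in> S" by blast
      obtain p s q where psq: "fst s = v" "N = p @ s # q" "sh N (p @ q @ [s])" using la_move[OF v(1)] by blast
      define R where "R = p @ q"
      have shN: "sh N (R @ [s])" using psq R_def by simp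
      have rR: "red R" using red_prefix red_sh[OF shN rN] by blast
      have vN: "fst ` set N = insert v (fst ` set R)" using vert_sh[OF shN] psq by auto
      have RV: "fst ` set R \<subseteq> V" using vN NV by simp
      have lenR: "length R < length N" using psq R_def by simp
      have vV: "v \<in> V" using vN NV by simp
      have eN: "geq (expand N) (expand R @ pw v (snd s))" using expand_sh[OF shN NV] psq by simp
      let ?P = "pw v (snd s)" and ?X = "expand R" and ?U = "expand U"
      have PL: "?P \<in> LV" using pw_lists[OF vV] .
      have XL: "?X \<in> LV" using expand_lists[OF RV] .
      have "geq (?X @ ?U @ ?P) (?X @ ?P @ ?U)"
        using geq_app[OF geq_refl[OF XL] geq_sym[OF pwc[OF v(2)]]] .
      also have "geq (?X @ ?P @ ?U) (expand N @ ?U)"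
        using geq_app[OF geq_sym[OF eN] geq_refl[OF UL]] by simp
      also have "geq (expand N @ ?U) (?U @ expand N)" using cm .
      also have "geq (?U @ expand N) (?U @ ?X @ ?P)"
        using geq_app[OF geq_refl[OF UL] eN] .
      finally have "geq ((?X @ ?U) @ ?P) ((?U @ ?X) @ ?P)" by simp
      then have "geq (?X @ ?U) (?U @ ?X)" by (rule cancel_right)
      then have "fst ` set R \<subseteq> S" using less.hyps[OF lenR rR RV] by blast
      then show ?thesis using vN v(2) by simp
    next
      case la0: True
      show ?thesis
      proof (cases N)
        case Nil then show ?thesis by simp
      next
        case (Cons s r)
        have r1: "red (U @ N)"
        proof (rule red_UN[OF rU rN])
          show "\<forall>v\<in>fst ` set U. v \<notin> fa N" using fa0 AS A_def by blast
        qed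
        have r2: "red (N @ U)"
        proof (rule red_NU[OF rN rU])
          show "fa U \<inter> la N = {}" using la0 AS A_def fa_vert[of U] by blast
        qed
        have a1: "act (expand (N @ U)) [] = N @ U" using act_expand[of "N @ U" "[]"] r2 by simp
        have a2: "act (expand (U @ N)) [] = U @ N" using act_expand[of "U @ N" "[]"] r1 by simp
        have cm': "geq (expand (N @ U)) (expand (U @ N))" using cm by simp
        have "sh (act (expand (N @ U)) []) (act (expand (U @ N)) [])"
          using compat[OF cm'] by simp
        then have "sh (N @ U) (U @ N)" using a1 a2 by simp
        then have fe: "fa (N @ U) = fa (U @ N)" by (rule fa_sh)
        have c1: "fst s \<in> fa (N @ U)" using Cons by simp
        have cS: "fst s \<notin> S" using fa0 Cons by auto
        have cV: "fst s \<in> V" using NV Cons by auto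
        have c2: "fst s \<in> fa (U @ N)" using c1 fe by simp
        have "fst s \<in> fa U \<or> (\<forall>t\<in>set U. E (fst s) (fst t))"
          using c2 unfolding fa_app by blast
        then show ?thesis
        proof
          assume "fst s \<in> fa U" then show ?thesis using cS AS A_def fa_vert[of U] by blast
        next
          assume "\<forall>t\<in>set U. E (fst s) (fst t)"
          then have "fst s \<in> S" using cV S by blast
          then show ?thesis using cS by blast
        qed
      qed
    qed
  qed
qed

end


context GP begin

abbreviation cls where "cls \<equiv> gp_cls V E od"
abbreviation GG where "GG \<equiv> graph_product V E od"

lemma cls_mem: "w' \<in> cls w \<longleftrightarrow> geq w w'"
  unfolding gp_cls_def gp_rel_def by auto

lemma cls_eq: "a \<in> LV \<Longrightarrow> cls a = cls b \<longleftrightarrow> geq a b"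
proof
  assume a: "a \<in> LV" and e: "cls a = cls b"
  have "a \<in> cls a" using geq_refl[OF a] cls_mem by blast
  then have "geq b a" using e cls_mem by blast
  then show "geq a b" by (rule geq_sym)
next
  assume "geq a b"
  then show "cls a = cls b" unfolding set_eq_iff cls_mem using geq_sym geq_trans by blast
qed

lemma carrier_cls: "g \<in> carrier GG \<Longrightarrow> \<exists>x\<in>LV. g = cls x"
  unfolding graph_product_def quotient_def gp_cls_def by auto

lemma cls_carrier: "x \<in> LV \<Longrightarrow> cls x \<in> carrier GG"
  unfolding graph_product_def quotient_def gp_cls_def by auto

lemma mult_cls: "x \<in> LV \<Longrightarrow> y \<in> LV \<Longrightarrow> cls x \<otimes>\<^bsub>GG\<^esub> cls y = cls (x @ y)"
proof -
  assume x: "x \<in> LV" and y: "y \<in> LV"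
  have m: "cls x \<otimes>\<^bsub>GG\<^esub> cls y = (\<Union>x'\<in>cls x. \<Union>y'\<in>cls y. cls (x' @ y'))"
    unfolding graph_product_def by simp
  have c: "cls (x' @ y') = cls (x @ y)" if "x' \<in> cls x" "y' \<in> cls y" for x' y'
  proof -
    have "geq (x @ y) (x' @ y')" using that cls_mem geq_app by blast
    moreover have "x @ y \<in> LV" using x y by simp
    ultimately show ?thesis using cls_eq by blast
  qed
  have xx: "x \<in> cls x" "y \<in> cls y" using geq_refl x y cls_mem by blast+
  show ?thesis unfolding m using c xx by blast
qed

lemma reduced_exists: "x \<in> LV \<Longrightarrow> \<exists>w. reduced_word V E od w \<and> geq x w"
proof -
  assume x: "x \<in> LV"
  obtain w where w: "geq x w" "\<forall>y. geq x y \<longrightarrow> length w \<le> length y"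
    using ex_has_least_nat[of "\<lambda>w. geq x w" x length] geq_refl[OF x] by blast
  have "w \<in> LV" using geq_lists[OF w(1)] by blast
  moreover have "\<forall>w'. geq w w' \<longrightarrow> length w \<le> length w'" using w geq_trans by blast
  ultimately show ?thesis using w unfolding reduced_word_def by blast
qed

lemma lists_vert: "fst ` set w \<subseteq> T \<Longrightarrow> w \<in> lists (letters T)"
  by (auto simp: letters_def)

lemma vert_lists: "w \<in> lists (letters T) \<Longrightarrow> fst ` set w \<subseteq> T"
  by (auto simp: letters_def)

lemma centr:
  assumes uc: "u \<in> carrier GG" and cp: "CP_element V E od u"
  shows "centralizer GG u = gp_sub V E od (gp_st V E od u)"
proof -
  obtain y where y: "y \<in> LV" "u = cls y" using carrier_cls[OF uc] by blast
  obtain D z where D: "complete_subgraph V E D" "z \<in> lists (letters D)" "u = cls z"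
    using cp unfolding CP_element_def gp_sub_def by blast
  define U where "U = act y []"
  have rU: "red U" unfolding U_def by (rule red_act) simp
  have yV: "fst ` set y \<subseteq> V" using vert_lists[OF y(1)] .
  have "fst ` set (act y []) \<subseteq> fst ` set y" using vert_act[of y "[]"] by simp
  then have UV: "fst ` set U \<subseteq> V" using yV unfolding U_def by (rule subset_trans)
  have eU: "geq (expand U) y" using sound_act[OF y(1), of "[]"] unfolding U_def by simp
  have "cls y = cls (expand U)" using cls_eq[OF y(1)] geq_sym[OF eU] by blast
  then have uU: "u = cls (expand U)" using y(2) by simp
  have EUL: "expand U \<in> LV" using expand_lists[OF UV] .
  have EUA: "expand U \<in> lists (letters (fst ` set U))" by (rule lists_vert[OF vert_expand_sub])
  have supp: "gp_supp V E od u = fst ` set U"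
  proof
    show "gp_supp V E od u \<subseteq> fst ` set U"
    proof
      fix v assume "v \<in> gp_supp V E od u"
      then obtain w where w: "cls w = u" "reduced_word V E od w" "v \<in> fst ` set w"
        unfolding gp_supp_def by blast
      have wL: "w \<in> LV" using w(2) unfolding reduced_word_def by blast
      have "cls w = cls (expand U)" using w(1) uU by simp
      then have "geq w (expand U)" using cls_eq[OF wL] by blast
      then have "fst ` set w \<subseteq> fst ` set U" using reduced_in[OF w(2) _ EUA] by blast
      then show "v \<in> fst ` set U" using w(3) by blast
    qed
  next
    show "fst ` set U \<subseteq> gp_supp V E od u"
    proof
      fix v assume v: "v \<in> fst ` set U"
      obtain w where w: "reduced_word V E od w" "geq y w" using reduced_exists[OF y(1)] by blast
      have "cls y = cls w" using cls_eq[OF y(1)] w(2) by blast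
      then have cw: "cls w = u" using y(2) by simp
      have "sh (act y []) (act w [])" using compat[OF w(2)] by simp
      then have "fst ` set U = fst ` set (act w [])" using vert_sh unfolding U_def by blast
      also have "\<dots> \<subseteq> fst ` set w" using vert_act[of w "[]"] by simp
      finally show "v \<in> gp_supp V E od u" using v w(1) cw unfolding gp_supp_def by blast
    qed
  qed
  have suppD: "gp_supp V E od u \<subseteq> D"
  proof
    fix v assume "v \<in> gp_supp V E od u"
    then obtain w where w: "cls w = u" "reduced_word V E od w" "v \<in> fst ` set w"
      unfolding gp_supp_def by blast
    have wL: "w \<in> LV" using w(2) unfolding reduced_word_def by blast
    have "cls w = cls z" using w(1) D(3) by simp
    then have "geq w z" using cls_eq[OF wL] by blast
    then have "fst ` set w \<subseteq> D" using reduced_in[OF w(2) _ D(2)] by blast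
    then show "v \<in> D" using w(3) by blast
  qed
  define A where "A = fst ` set U"
  have cl: "\<forall>a\<in>A. \<forall>b\<in>A. a \<noteq> b \<longrightarrow> E a b"
    using suppD supp D(1) unfolding complete_subgraph_def A_def by blast
  define S where "S = A \<union> {v \<in> V. \<forall>a\<in>A. E v a}"
  have st: "gp_st V E od u = S" unfolding gp_st_def supp S_def A_def by simp
  have SV: "S \<subseteq> V" using UV unfolding S_def A_def by blast
  have lc: "lcomm a b" if a: "fst a \<in> S" and b: "fst b \<in> A" for a b
  proof (cases "fst a = fst b")
    case True
    have "fst a \<in> V" using a SV by blast
    then show ?thesis using lcomm_same True by (cases a, cases b) simp
  next
    case False
    have "E (fst a) (fst b)"
    proof (cases "fst a \<in> A")
      case True then show ?thesis using cl False b by blast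
    next
      case False then show ?thesis using a b unfolding S_def by blast
    qed
    then show ?thesis using lcomm_E by (cases a, cases b) simp
  qed
  show ?thesis
  proof
    show "centralizer GG u \<subseteq> gp_sub V E od (gp_st V E od u)"
    proof
      fix g assume "g \<in> centralizer GG u"
      then have gc: "g \<in> carrier GG" "g \<otimes>\<^bsub>GG\<^esub> u = u \<otimes>\<^bsub>GG\<^esub> g" unfolding centralizer_def by auto
      obtain x where x: "x \<in> LV" "g = cls x" using carrier_cls[OF gc(1)] by blast
      have "cls (x @ expand U) = cls (expand U @ x)"
        using gc(2) mult_cls[OF x(1) EUL] mult_cls[OF EUL x(1)] x(2) uU by simp
      then have cxu: "geq (x @ expand U) (expand U @ x)" using cls_eq x(1) EUL by simp
      define N where "N = act x []"
      have rN: "red N" unfolding N_def by (rule red_act) simp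
      have NV: "fst ` set N \<subseteq> V" using vert_act[of x "[]"] vert_lists[OF x(1)] unfolding N_def by auto
      have eN: "geq (expand N) x" using sound_act[OF x(1), of "[]"] unfolding N_def by simp
      have "geq (expand N @ expand U) (x @ expand U)" using geq_app[OF eN geq_refl[OF EUL]] .
      also have "geq (x @ expand U) (expand U @ x)" using cxu .
      also have "geq (expand U @ x) (expand U @ expand N)" using geq_app[OF geq_refl[OF EUL] geq_sym[OF eN]] .
      finally have cm: "geq (expand N @ expand U) (expand U @ expand N)" .
      have "fst ` set N \<subseteq> S"
        using main[OF rU UV cl[unfolded A_def] S_def[unfolded A_def] rN NV cm] .
      then have "expand N \<in> lists (letters S)" by (rule lists_vert[OF subset_trans[OF vert_expand_sub]])
      moreover have "cls x = cls (expand N)" using cls_eq[OF x(1)] geq_sym[OF eN] by blast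
      then have "g = cls (expand N)" by (simp add: x(2))
      ultimately show "g \<in> gp_sub V E od (gp_st V E od u)" unfolding st gp_sub_def by blast
    qed
  next
    show "gp_sub V E od (gp_st V E od u) \<subseteq> centralizer GG u"
    proof
      fix g assume "g \<in> gp_sub V E od (gp_st V E od u)"
      then obtain x where x: "x \<in> lists (letters S)" "g = cls x" unfolding st gp_sub_def by blast
      have "fst ` set x \<subseteq> V" using vert_lists[OF x(1)] SV by (rule subset_trans)
      then have xL: "x \<in> LV" by (rule lists_vert)
      have "\<forall>a\<in>set x. \<forall>b\<in>set (expand U). lcomm a b"
      proof (intro ballI)
        fix a b assume ab: "a \<in> set x" "b \<in> set (expand U)"
        have fa: "fst a \<in> S" using vert_lists[OF x(1)] ab(1) by blast
        have fb: "fst b \<in> A" using vert_expand_sub[of U] ab(2) unfolding A_def by blast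
        show "lcomm a b" by (rule lc[OF fa fb])
      qed
      then have c: "geq (x @ expand U) (expand U @ x)" by (rule comm_block[OF xL EUL])
      have "g \<otimes>\<^bsub>GG\<^esub> u = cls (x @ expand U)" using mult_cls[OF xL EUL] x(2) uU by simp
      also have "\<dots> = cls (expand U @ x)" using c cls_eq xL EUL by simp
      also have "\<dots> = u \<otimes>\<^bsub>GG\<^esub> g" using mult_cls[OF EUL xL] x(2) uU by simp
      finally show "g \<in> centralizer GG u" unfolding centralizer_def using cls_carrier[OF xL] x(2) by simp
    qed
  qed
qed

end

theorem lemma2p2:
  fixes V :: "'v set" and E :: "'v \<Rightarrow> 'v \<Rightarrow> bool" and ord :: "'v \<Rightarrow> nat"
    and u :: "'v letter list set"
  assumes "labeled_graph V E"
    and "\<forall>v\<in>V. dir_indec_cyclic_order (ord v)"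
    and "u \<in> carrier (graph_product V E ord)"
    and "CP_element V E ord u"
  shows "centralizer (graph_product V E ord) u = gp_sub V E ord (gp_st V E ord u)"
proof -
  interpret GP V E ord
    using assms(1) unfolding labeled_graph_def by unfold_locales blast+
  show ?thesis using centr[OF assms(3,4)] .
qed


end
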